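(* Let $G=(V,E)$ be a finite, simple, connected graph, and let $\chi(G)$ denote its chromatic number. Then \[\frac{\chi(G)(\chi(G)-1)}{2} + |V| - \chi(G) = |E|\] holds if and only if $G$ is of type A or of type B.
   Context: All graphs are finite and simple (no loops, no multiple edges). Say that a graph $G$ is obtained from a graph $H$ by attaching trees if $G$ can be built from $H$ by a finite sequence (possibly empty) of steps, each of which adds one new vertex joined by an edge to exactly one already existing vertex (equivalently, $H$ is a subgraph of $G$ and the graph obtained from $G$ by deleting the edges of $H$ is a forest each of whose components contains exactly one vertex of $H$). A connected graph is of type A if it is obtained by attaching trees to a complete graph $K_n$ for some $n\ge 1$; it is of type B if it is obtained by attaching trees to an odd cycle $C_{2m+1}$ for some $m\ge 1$. The complete graph or odd cycle is called the underlying graph. *)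

theory Defs
  imports Main
begin

definition simple_graph :: "'a set \<Rightarrow> 'a set set \<Rightarrow> bool" where
  "simple_graph V E \<longleftrightarrow> finite V \<and>
     (\<forall>e\<in>E. \<exists>u v. u \<in> V \<and> v \<in> V \<and> u \<noteq> v \<and> e = {u, v})"

definition adj :: "'a set set \<Rightarrow> 'a \<Rightarrow> 'a \<Rightarrow> bool" where
  "adj E u v \<longleftrightarrow> {u, v} \<in> E"

definition connected_graph :: "'a set \<Rightarrow> 'a set set \<Rightarrow> bool" where
  "connected_graph V E \<longleftrightarrow> V \<noteq> {} \<and> (\<forall>u\<in>V. \<forall>v\<in>V. (adj E)\<^sup>*\<^sup>* u v)"

definition proper_colouring :: "'a set \<Rightarrow> 'a set set \<Rightarrow> nat \<Rightarrow> ('a \<Rightarrow> nat) \<Rightarrow> bool" where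
  "proper_colouring V E k f \<longleftrightarrow> (\<forall>v\<in>V. f v < k) \<and> (\<forall>u v. {u, v} \<in> E \<longrightarrow> f u \<noteq> f v)"

definition chromatic_number :: "'a set \<Rightarrow> 'a set set \<Rightarrow> nat" where
  "chromatic_number V E = (LEAST k. \<exists>f. proper_colouring V E k f)"

inductive attach_trees :: "'a set \<Rightarrow> 'a set set \<Rightarrow> 'a set \<Rightarrow> 'a set set \<Rightarrow> bool" where
  refl: "attach_trees VH EH VH EH"
| step: "attach_trees VH EH V E \<Longrightarrow> u \<in> V \<Longrightarrow> w \<notin> V \<Longrightarrow>
         attach_trees VH EH (insert w V) (insert {u, w} E)"

definition complete_edges :: "'a set \<Rightarrow> 'a set set" where
  "complete_edges K = {{u, v} | u v. u \<in> K \<and> v \<in> K \<and> u \<noteq> v}"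

definition cycle_vertices :: "nat \<Rightarrow> (nat \<Rightarrow> 'a) \<Rightarrow> 'a set" where
  "cycle_vertices n c = c ` {..<n}"

definition cycle_edges :: "nat \<Rightarrow> (nat \<Rightarrow> 'a) \<Rightarrow> 'a set set" where
  "cycle_edges n c = {{c i, c (Suc i mod n)} | i. i < n}"

definition type_A :: "'a set \<Rightarrow> 'a set set \<Rightarrow> bool" where
  "type_A V E \<longleftrightarrow> connected_graph V E \<and>
     (\<exists>K. finite K \<and> K \<noteq> {} \<and> attach_trees K (complete_edges K) V E)"

definition type_B :: "'a set \<Rightarrow> 'a set set \<Rightarrow> bool" where
  "type_B V E \<longleftrightarrow> connected_graph V E \<and>
     (\<exists>m c. m \<ge> 1 \<and> inj_on c {..<2*m+1} \<and>
        attach_trees (cycle_vertices (2*m+1) c) (cycle_edges (2*m+1) c) V E)"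

end

theory Submission
  imports Defs
begin

lemma sg_finV: "simple_graph V E \<Longrightarrow> finite V"
  by (simp add: simple_graph_def)

lemma sg_edge_ex: "simple_graph V E \<Longrightarrow> e \<in> E \<Longrightarrow> \<exists>a b. a \<in> V \<and> b \<in> V \<and> a \<noteq> b \<and> e = {a,b}"
  by (simp add: simple_graph_def)

lemma sg_edge: "simple_graph V E \<Longrightarrow> {u,v} \<in> E \<Longrightarrow> u \<in> V \<and> v \<in> V \<and> u \<noteq> v"
proof -
  assume s: "simple_graph V E" and e: "{u,v} \<in> E"
  then obtain a b where ab: "a \<in> V" "b \<in> V" "a \<noteq> b" "{u,v} = {a,b}"
    unfolding simple_graph_def by blast
  from ab(4) have "(u = a \<and> v = b) \<or> (u = b \<and> v = a)" by (simp add: doubleton_eq_iff)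
  then show ?thesis using ab by blast
qed

lemma sg_edge_sub: "simple_graph V E \<Longrightarrow> e \<in> E \<Longrightarrow> e \<subseteq> V"
proof -
  assume "simple_graph V E" "e \<in> E"
  then have "\<exists>u v. u \<in> V \<and> v \<in> V \<and> u \<noteq> v \<and> e = {u, v}"
    unfolding simple_graph_def by simp
  then show ?thesis by auto
qed

lemma sg_finE: "simple_graph V E \<Longrightarrow> finite E"
proof -
  assume s: "simple_graph V E"
  hence "E \<subseteq> Pow V" using sg_edge_sub by blast
  moreover have "finite V" using sg_finV[OF s] .
  ultimately show ?thesis using finite_subset by blast
qed

lemma cut_edge:
  assumes s: "simple_graph V E" and c: "connected_graph V E"
    and S: "S \<subseteq> V" "S \<noteq> {}" "S \<noteq> V"
  shows "\<exists>a\<in>S. \<exists>b\<in>V - S. {a,b} \<in> E"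
proof -
  obtain u where u: "u \<in> S" using S by blast
  obtain v where v: "v \<in> V" "v \<notin> S" using S by blast
  have r: "(adj E)\<^sup>*\<^sup>* u v" using c u v S unfolding connected_graph_def by blast
  have "\<And>x. (adj E)\<^sup>*\<^sup>* u x \<Longrightarrow> x \<in> V \<Longrightarrow> x \<notin> S \<Longrightarrow> \<exists>a\<in>S. \<exists>b\<in>V - S. {a,b} \<in> E"
  proof -
    fix x assume "(adj E)\<^sup>*\<^sup>* u x" "x \<in> V" "x \<notin> S"
    then show "\<exists>a\<in>S. \<exists>b\<in>V - S. {a,b} \<in> E"
    proof (induction rule: rtranclp_induct)
      case base then show ?case using u by simp
    next
      case (step y z)
      have yz: "{y,z} \<in> E" using step.hyps(2) unfolding adj_def .
      then have yV: "y \<in> V" using sg_edge[OF s] by blast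
      show ?case
      proof (cases "y \<in> S")
        case True
        have "z \<in> V - S" using step.prems by simp
        then show ?thesis using yz True by blast
      next
        case False then show ?thesis using step.IH yV by simp
      qed
    qed
  qed
  from this[OF r v] show ?thesis .
qed

definition Ein :: "'a set set \<Rightarrow> 'a set \<Rightarrow> 'a set set" where
  "Ein E W = {e\<in>E. e \<subseteq> W}"
definition Eout :: "'a set set \<Rightarrow> 'a set \<Rightarrow> 'a set set" where
  "Eout E W = {e\<in>E. \<not> e \<subseteq> W}"

lemma attach_trans:
  "attach_trees C D X Y \<Longrightarrow> attach_trees A B C D \<Longrightarrow> attach_trees A B X Y"
  by (induction rule: attach_trees.induct) (auto intro: attach_trees.step)

lemma tree_lemma:
  assumes s: "simple_graph V E" and c: "connected_graph V E"
  shows "W \<subseteq> V \<Longrightarrow> W \<noteq> {} \<Longrightarrow> card (Eout E W) \<ge> card (V - W) \<and>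
     (card (Eout E W) = card (V - W) \<longrightarrow> attach_trees W (Ein E W) V E)"
proof (induction "card (V - W)" arbitrary: W rule: less_induct)
  case less
  have fV: "finite V" using sg_finV[OF s] .
  have fE: "finite E" using sg_finE[OF s] .
  show ?case
  proof (cases "W = V")
    case True
    then have "Ein E W = E" using sg_edge_sub[OF s] unfolding Ein_def by blast
    then show ?thesis using True by (simp add: attach_trees.refl)
  next
    case False
    then obtain a b where ab: "a \<in> W" "b \<in> V - W" "{a,b} \<in> E"
      using cut_edge[OF s c less.prems(1) less.prems(2)] by blast
    define W' where "W' = insert b W"
    have W'V: "W' \<subseteq> V" using ab less.prems W'_def by blast
    have VW': "V - W' = (V - W) - {b}" unfolding W'_def by blast
    have fVW: "finite (V - W)" using fV by simp
    have lt: "card (V - W') < card (V - W)" unfolding VW'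
      using card_Diff1_less[OF fVW] ab(2) by blast
    have IH: "card (Eout E W') \<ge> card (V - W') \<and>
      (card (Eout E W') = card (V - W') \<longrightarrow> attach_trees W' (Ein E W') V E)"
    proof -
      have "W' \<noteq> {}" unfolding W'_def by simp
      then show ?thesis using less.hyps[OF lt W'V] by blast
    qed
    have cVW: "card (V - W) = Suc (card (V - W'))" unfolding VW'
      using card_Suc_Diff1[OF fVW ab(2)] by simp
    have sub: "insert {a,b} (Eout E W') \<subseteq> Eout E W"
      unfolding Eout_def W'_def using ab by auto
    have nin: "{a,b} \<notin> Eout E W'" unfolding Eout_def W'_def using ab by auto
    have fo: "finite (Eout E W)" unfolding Eout_def using fE by simp
    have f': "finite (Eout E W')" unfolding Eout_def using fE by simp
    have cins: "card (insert {a,b} (Eout E W')) = Suc (card (Eout E W'))"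
        using f' nin by simp
    have cge: "card (Eout E W) \<ge> Suc (card (Eout E W'))"
    proof -
      have "card (insert {a,b} (Eout E W')) = Suc (card (Eout E W'))"
        using f' nin by simp
      then show ?thesis using card_mono[OF fo sub] by simp
    qed
    show ?thesis
    proof
      show "card (V - W) \<le> card (Eout E W)" using cge IH cVW by linarith
      show "card (Eout E W) = card (V - W) \<longrightarrow> attach_trees W (Ein E W) V E"
      proof
        assume eq: "card (Eout E W) = card (V - W)"
        have e1: "card (Eout E W') = card (V - W')" using eq cge IH cVW by linarith
        have e2: "insert {a,b} (Eout E W') = Eout E W"
          apply (rule card_subset_eq[OF fo sub])
          using e1 eq cVW cins by simp
        have e3: "Ein E W' = insert {a,b} (Ein E W)"
        proof
          show "Ein E W' \<subseteq> insert {a, b} (Ein E W)"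
          proof
            fix e assume e: "e \<in> Ein E W'"
            show "e \<in> insert {a, b} (Ein E W)"
            proof (cases "e \<subseteq> W")
              case True then show ?thesis using e unfolding Ein_def by auto
            next
              case False
              then have "e \<in> Eout E W" using e unfolding Ein_def Eout_def by auto
              then have "e \<in> insert {a,b} (Eout E W')" using e2 by simp
              then show ?thesis using e unfolding Ein_def Eout_def by auto
            qed
          qed
          show "insert {a, b} (Ein E W) \<subseteq> Ein E W'"
            unfolding Ein_def W'_def using ab by auto
        qed
        have st0: "attach_trees W (Ein E W) W' (insert {a,b} (Ein E W))"
          unfolding W'_def
          by (rule attach_trees.step[OF attach_trees.refl]) (use ab in auto)
        have st: "attach_trees W (Ein E W) W' (Ein E W')" using st0 e3 by simp
        show "attach_trees W (Ein E W) V E"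
        proof -
          have "attach_trees W' (Ein E W') V E" using IH e1 by blast
          then show ?thesis using attach_trans[OF _ st] by blast
        qed
      qed
    qed
  qed
qed

definition colourable :: "'a set set \<Rightarrow> 'a set \<Rightarrow> nat \<Rightarrow> bool" where
  "colourable E W k \<longleftrightarrow> (\<exists>f. (\<forall>v\<in>W. f v < k) \<and> (\<forall>u\<in>W. \<forall>v\<in>W. {u,v} \<in> E \<longrightarrow> f u \<noteq> f v))"

lemma pc_iff:
  assumes s: "simple_graph V E"
  shows "proper_colouring V E k f \<longleftrightarrow> (\<forall>v\<in>V. f v < k) \<and> (\<forall>u\<in>V. \<forall>v\<in>V. {u,v} \<in> E \<longrightarrow> f u \<noteq> f v)"
proof
  assume "proper_colouring V E k f" then show "(\<forall>v\<in>V. f v < k) \<and> (\<forall>u\<in>V. \<forall>v\<in>V. {u,v} \<in> E \<longrightarrow> f u \<noteq> f v)"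
    unfolding proper_colouring_def by simp
next
  assume a: "(\<forall>v\<in>V. f v < k) \<and> (\<forall>u\<in>V. \<forall>v\<in>V. {u,v} \<in> E \<longrightarrow> f u \<noteq> f v)"
  have "\<forall>u v. {u,v} \<in> E \<longrightarrow> f u \<noteq> f v"
  proof (intro allI impI)
    fix u v assume e: "{u,v} \<in> E"
    have uv: "u \<in> V" "v \<in> V" using sg_edge[OF s e] by auto
    have "\<forall>v\<in>V. {u,v} \<in> E \<longrightarrow> f u \<noteq> f v" using a uv(1) by simp
    then show "f u \<noteq> f v" using uv(2) e by simp
  qed
  then show "proper_colouring V E k f" unfolding proper_colouring_def using a by simp
qed

lemma colourable_card:
  assumes s: "simple_graph V E" and W: "W \<subseteq> V" "card W \<le> k"
  shows "colourable E W k"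
proof -
  have fW: "finite W" using sg_finV[OF s] W(1) finite_subset by blast
  obtain h where h: "bij_betw h W {0..<card W}" using ex_bij_betw_finite_nat[OF fW] by blast
  have "(\<forall>v\<in>W. h v < k)"
  proof
    fix v assume "v \<in> W"
    then have "h v \<in> h ` W" by (rule imageI)
    then have "h v \<in> {0..<card W}" using h unfolding bij_betw_def by simp
    then show "h v < k" using W(2) by simp
  qed
  moreover have "\<forall>u\<in>W. \<forall>v\<in>W. {u,v} \<in> E \<longrightarrow> h u \<noteq> h v"
  proof (intro ballI impI)
    fix u v assume uv: "u \<in> W" "v \<in> W" "{u,v} \<in> E"
    then have "u \<noteq> v" using sg_edge[OF s] by blast
    then show "h u \<noteq> h v" using h uv unfolding bij_betw_def inj_on_def by blast
  qed
  ultimately show ?thesis unfolding colourable_def by blast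
qed

lemma chi_le_iff:
  assumes s: "simple_graph V E"
  shows "chromatic_number V E \<le> k \<longleftrightarrow> colourable E V k"
proof
  have ex: "\<exists>k f. proper_colouring V E k f"
    using colourable_card[OF s, of V "card V"] pc_iff[OF s] unfolding colourable_def by blast
  then obtain k0 f0 where "proper_colouring V E k0 f0" by blast
  then have "Ex (proper_colouring V E k0)" by blast
  then have "Ex (proper_colouring V E (LEAST k. Ex (proper_colouring V E k)))" by (rule LeastI)
  then have "\<exists>f. proper_colouring V E (chromatic_number V E) f"
    unfolding chromatic_number_def by simp
  then obtain f where f: "proper_colouring V E (chromatic_number V E) f" by blast
  assume le: "chromatic_number V E \<le> k"
  have "proper_colouring V E k f" using f le unfolding proper_colouring_def by auto
  then show "colourable E V k" using pc_iff[OF s] unfolding colourable_def by blast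
next
  assume "colourable E V k"
  then obtain f where "proper_colouring V E k f" using pc_iff[OF s] unfolding colourable_def by blast
  then have "Ex (proper_colouring V E k)" by blast
  then show "chromatic_number V E \<le> k" unfolding chromatic_number_def by (rule Least_le)
qed

lemma colourable_mono: "colourable E W k \<Longrightarrow> W' \<subseteq> W \<Longrightarrow> colourable E W' k"
  unfolding colourable_def by blast

lemma deg_sum:
  assumes s: "simple_graph V E" and fW: "finite W"
  shows "(\<Sum>u\<in>W. card {v\<in>W. {u,v} \<in> E}) \<le> 2 * card (Ein E W)"
proof -
  have fE: "finite E" using sg_finE[OF s] .
  define P where "P e = {p \<in> e \<times> e. {fst p, snd p} = e}" for e :: "'a set"
  have fEW: "finite (Ein E W)" unfolding Ein_def using fE by simp
  have Pfin: "finite (P e)" if "e \<in> Ein E W" for e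
  proof -
    have "e \<subseteq> W" using that unfolding Ein_def by simp
    then have "finite e" using fW finite_subset by blast
    then show ?thesis unfolding P_def by simp
  qed
  have Pcard: "card (P e) \<le> 2" if "e \<in> Ein E W" for e
  proof -
    have "e \<in> E" using that unfolding Ein_def by simp
    then obtain a b where ab: "e = {a,b}" using sg_edge_ex[OF s] by blast
    have "P e \<subseteq> {(a,b),(b,a)}" unfolding P_def ab by (auto simp: doubleton_eq_iff)
    then have "card (P e) \<le> card {(a,b),(b,a)}" using card_mono[of "{(a,b),(b,a)}" "P e"] by simp
    also have "\<dots> \<le> 2" by (cases "a = b") auto
    finally show ?thesis .
  qed
  have "(\<Sum>u\<in>W. card {v\<in>W. {u,v} \<in> E}) = card (SIGMA u:W. {v\<in>W. {u,v} \<in> E})"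
    using fW by simp
  also have "\<dots> \<le> card (\<Union>e\<in>Ein E W. P e)"
  proof (rule card_mono)
    show "finite (\<Union>e\<in>Ein E W. P e)" using fEW Pfin by blast
    show "(SIGMA u:W. {v\<in>W. {u,v} \<in> E}) \<subseteq> (\<Union>e\<in>Ein E W. P e)"
    proof
      fix p assume "p \<in> (SIGMA u:W. {v\<in>W. {u,v} \<in> E})"
      then obtain u v where p: "p = (u,v)" "u \<in> W" "v \<in> W" "{u,v} \<in> E" by blast
      then have "{u,v} \<in> Ein E W" unfolding Ein_def by simp
      moreover have "p \<in> P {u,v}" unfolding P_def p by simp
      ultimately show "p \<in> (\<Union>e\<in>Ein E W. P e)" by blast
    qed
  qed
  also have "\<dots> \<le> (\<Sum>e\<in>Ein E W. card (P e))" by (rule card_UN_le[OF fEW])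
  also have "\<dots> \<le> (\<Sum>e\<in>Ein E W. 2)" by (rule sum_mono) (use Pcard in blast)
  also have "\<dots> = 2 * card (Ein E W)" by simp
  finally show ?thesis .
qed

lemma card_complete_edges:
  assumes "finite W"
  shows "card (complete_edges W) = card W * (card W - 1) div 2"
proof -
  have "complete_edges W = {B. B \<subseteq> W \<and> card B = 2}"
  proof
    show "complete_edges W \<subseteq> {B. B \<subseteq> W \<and> card B = 2}"
      unfolding complete_edges_def by auto
    show "{B. B \<subseteq> W \<and> card B = 2} \<subseteq> complete_edges W"
    proof
      fix B assume "B \<in> {B. B \<subseteq> W \<and> card B = 2}"
      then have B: "B \<subseteq> W" "card B = 2" by auto
      then obtain x y where "B = {x,y}" "x \<noteq> y" using card_2_iff by metis
      then show "B \<in> complete_edges W" unfolding complete_edges_def using B(1) by blast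
    qed
  qed
  then show ?thesis using n_subsets[OF assms, of 2] choose_two by simp
qed

lemma Ein_sub_complete:
  assumes s: "simple_graph V E"
  shows "Ein E W \<subseteq> complete_edges W"
proof
  fix e assume e: "e \<in> Ein E W"
  then have "e \<in> E" "e \<subseteq> W" unfolding Ein_def by auto
  then obtain a b where "a \<noteq> b" "e = {a,b}" using sg_edge_ex[OF s] by blast
  then show "e \<in> complete_edges W" unfolding complete_edges_def using \<open>e \<subseteq> W\<close> by blast
qed

lemma arith_crit:
  fixes e h j D S :: nat
  assumes "S \<le> 2 * e" "h * j \<le> S" "h \<ge> j + 1" "j \<ge> 3" "2 * D = (j+1) * j"
  shows "e + (j+1) \<ge> h + D \<and> (e + (j+1) = h + D \<longrightarrow> h = j + 1 \<and> e = D)"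
proof -
  define d where "d = h - (j+1)"
  have hd: "h = j + 1 + d" using assms(3) d_def by simp
  have "h * j = (j+1)*j + d * j" unfolding hd by (simp add: algebra_simps)
  moreover have "d * j \<ge> 3 * d" using assms(4) by simp
  moreover have "d > 0 \<Longrightarrow> d * j > 2 * d" using assms(4) by simp
  ultimately show ?thesis using assms hd by linarith
qed

lemma crit_core:
  assumes s: "simple_graph V E" and nc: "\<not> colourable E V j" and j: "j \<ge> 3"
  shows "\<exists>W. W \<subseteq> V \<and> W \<noteq> {} \<and> card (Ein E W) + (j+1) \<ge> card W + (j+1)*j div 2 \<and>
     (card (Ein E W) + (j+1) = card W + (j+1)*j div 2 \<longrightarrow> Ein E W = complete_edges W)"
proof -
  have fV: "finite V" using sg_finV[OF s] .
  obtain W where W: "W \<subseteq> V \<and> \<not> colourable E W j"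
    and Wmin: "\<And>Y. Y \<subseteq> V \<and> \<not> colourable E Y j \<Longrightarrow> card W \<le> card Y"
    using ex_has_least_nat[of "\<lambda>W. W \<subseteq> V \<and> \<not> colourable E W j" V card] nc by blast
  have fW: "finite W" using W fV finite_subset by blast
  have hj: "card W \<ge> j + 1"
  proof (rule ccontr)
    assume "\<not> card W \<ge> j + 1"
    then have "card W \<le> j" by simp
    then have "colourable E W j" using colourable_card[OF s] W by blast
    then show False using W by blast
  qed
  have Wne: "W \<noteq> {}" using hj by auto
  have deg: "card {v\<in>W. {u,v} \<in> E} \<ge> j" if u: "u \<in> W" for u
  proof (rule ccontr)
    assume lt: "\<not> card {v\<in>W. {u,v} \<in> E} \<ge> j"
    define N where "N = {v\<in>W. {u,v} \<in> E}"
    have "card (W - {u}) < card W" by (rule card_Diff1_less[OF fW u])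
    then have "colourable E (W - {u}) j" using Wmin[of "W - {u}"] W by fastforce
    then obtain g where g: "\<forall>v\<in>W - {u}. g v < j"
      "\<forall>x\<in>W - {u}. \<forall>y\<in>W - {u}. {x,y} \<in> E \<longrightarrow> g x \<noteq> g y" unfolding colourable_def by blast
    have "card (g ` N) \<le> card N" by (rule card_image_le) (use fW N_def in simp)
    then have "card (g ` N) < j" using lt N_def by simp
    moreover have "finite (g ` N)" using fW N_def by simp
    ultimately have "\<not> {..<j} \<subseteq> g ` N"
      using card_mono[of "g ` N" "{..<j}"] by auto
    then obtain c where c: "c < j" "c \<notin> g ` N" by blast
    define f where "f = g(u := c)"
    have "colourable E W j"
      unfolding colourable_def
    proof (intro exI conjI ballI impI)
      fix v assume "v \<in> W" then show "f v < j" using g(1) c unfolding f_def by auto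
    next
      fix x y assume xy: "x \<in> W" "y \<in> W" "{x,y} \<in> E"
      have xny: "x \<noteq> y" using sg_edge[OF s xy(3)] by simp
      show "f x \<noteq> f y"
      proof (cases "x = u")
        case True
        then have "y \<in> N" unfolding N_def using xy by simp
        then have "g y \<in> g ` N" by simp
        then show ?thesis unfolding f_def using True xny c by auto
      next
        case False
        show ?thesis
        proof (cases "y = u")
          case True
          have "{u,x} \<in> E" using xy True by (simp add: insert_commute)
          then have "x \<in> N" unfolding N_def using xy by simp
          then have "g x \<in> g ` N" by simp
          then show ?thesis unfolding f_def using True False c by auto
        next
          case False2: False
          have "x \<in> W - {u}" "y \<in> W - {u}" using xy False False2 by auto
          then have "g x \<noteq> g y" using g(2) xy(3) by simp
          then show ?thesis unfolding f_def using False False2 by simp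
        qed
      qed
    qed
    then show False using W by blast
  qed
  have "card W * j \<le> (\<Sum>u\<in>W. card {v\<in>W. {u,v} \<in> E})"
    using sum_mono[of W "\<lambda>_. j" "\<lambda>u. card {v\<in>W. {u,v} \<in> E}"] deg by simp
  moreover have "(\<Sum>u\<in>W. card {v\<in>W. {u,v} \<in> E}) \<le> 2 * card (Ein E W)" by (rule deg_sum[OF s fW])
  moreover have "2 * ((j+1)*j div 2) = (j+1)*j" by simp
  ultimately have ar: "card (Ein E W) + (j+1) \<ge> card W + (j+1)*j div 2 \<and>
    (card (Ein E W) + (j+1) = card W + (j+1)*j div 2 \<longrightarrow> card W = j + 1 \<and> card (Ein E W) = (j+1)*j div 2)"
    using arith_crit[OF _ _ hj j] by blast
  have "card (Ein E W) + (j+1) = card W + (j+1)*j div 2 \<longrightarrow> Ein E W = complete_edges W"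
  proof
    assume "card (Ein E W) + (j+1) = card W + (j+1)*j div 2"
    then have cc: "card W = j + 1" "card (Ein E W) = (j+1)*j div 2" using ar by auto
    have "card (complete_edges W) = (j+1)*j div 2" using card_complete_edges[OF fW] cc by simp
    moreover have "finite (complete_edges W)"
    proof -
      have "complete_edges W \<subseteq> Pow W" unfolding complete_edges_def by auto
      then show ?thesis using fW finite_subset by blast
    qed
    ultimately show "Ein E W = complete_edges W"
      using card_subset_eq[of "complete_edges W" "Ein E W"] Ein_sub_complete[OF s] cc by simp
  qed
  then show ?thesis using W Wne ar by blast
qed

lemma adj_sym: "adj E x y \<Longrightarrow> adj E y x"
  unfolding adj_def by (simp add: insert_commute)

lemma relpow_sym: "(adj E ^^ n) x y \<Longrightarrow> (adj E ^^ n) y x"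
proof -
  assume "(adj E ^^ n) x y"
  then obtain f where f: "f 0 = x" "f n = y" "\<forall>i<n. adj E (f i) (f (Suc i))"
    using relpowp_fun_conv by metis
  define g where "g i = f (n - i)" for i
  have "g 0 = y" "g n = x" using f g_def by auto
  moreover have "\<forall>i<n. adj E (g i) (g (Suc i))"
  proof (intro allI impI)
    fix i assume i: "i < n"
    have "adj E (f (n - Suc i)) (f (Suc (n - Suc i)))" using f(3) i by simp
    moreover have "Suc (n - Suc i) = n - i" using i by simp
    ultimately show "adj E (g i) (g (Suc i))" unfolding g_def using adj_sym by metis
  qed
  ultimately show ?thesis using relpowp_fun_conv by metis
qed

lemma relpow_comp: "(R ^^ a) x y \<Longrightarrow> (R ^^ b) y z \<Longrightarrow> (R ^^ (a + b)) x z"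
  by (auto simp: relpowp_add)

lemma no_odd_colourable:
  assumes s: "simple_graph V E" and c: "connected_graph V E"
    and no: "\<And>n v. odd n \<Longrightarrow> \<not> (adj E ^^ n) v v"
  shows "colourable E V 2"
proof -
  obtain r where r: "r \<in> V" using c unfolding connected_graph_def by blast
  have ex: "\<exists>n. (adj E ^^ n) r v" if "v \<in> V" for v
    using c r that unfolding connected_graph_def rtranclp_power by blast
  define L where "L v = (LEAST n. (adj E ^^ n) r v)" for v
  have L: "(adj E ^^ L v) r v" if "v \<in> V" for v
    unfolding L_def using ex[OF that] by (rule LeastI_ex)
  define f where "f v = L v mod 2" for v
  have "\<forall>v\<in>V. f v < 2" unfolding f_def by simp
  moreover have "\<forall>u\<in>V. \<forall>v\<in>V. {u,v} \<in> E \<longrightarrow> f u \<noteq> f v"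
  proof (intro ballI impI)
    fix u v assume uv: "u \<in> V" "v \<in> V" "{u,v} \<in> E"
    show "f u \<noteq> f v"
    proof
      assume eq: "f u = f v"
      have "(adj E ^^ (L u + 1)) r v"
        using L[OF uv(1)] uv(3) unfolding adj_def by (auto simp: relpowp_add)
      moreover have "(adj E ^^ L v) v r" by (rule relpow_sym[OF L[OF uv(2)]])
      ultimately have "(adj E ^^ (L u + 1 + L v)) r r" by (rule relpow_comp)
      moreover have "odd (L u + 1 + L v)" using eq unfolding f_def by presburger
      ultimately show False using no by blast
    qed
  qed
  ultimately show ?thesis unfolding colourable_def by blast
qed

lemma sucmod_lemma: "i < n \<Longrightarrow> 3 \<le> n \<Longrightarrow> Suc (Suc i mod n) mod n \<noteq> i"
  by (auto simp: mod_Suc split: if_splits)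

lemma card_cycle_edges:
  assumes inj: "inj_on c {..<n}" and n: "n \<ge> 3"
  shows "card (cycle_edges n c) = n"
proof -
  define s where "s i = Suc i mod n" for i
  have ce: "cycle_edges n c = (\<lambda>i. {c i, c (s i)}) ` {..<n}"
    unfolding cycle_edges_def s_def by auto
  have sl: "s i < n" for i unfolding s_def using n by simp
  have "inj_on (\<lambda>i. {c i, c (s i)}) {..<n}"
  proof (rule inj_onI)
    fix i j assume ij: "i \<in> {..<n}" "j \<in> {..<n}" "{c i, c (s i)} = {c j, c (s j)}"
    show "i = j"
    proof (cases "c i = c j")
      case True then show ?thesis using inj ij unfolding inj_on_def by blast
    next
      case False
      then have "c i = c (s j)" "c (s i) = c j" using ij(3) by (auto simp: doubleton_eq_iff)
      then have "i = s j" "s i = j" using inj ij sl unfolding inj_on_def by auto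
      then have "s (s i) = i" by simp
      then show ?thesis using sucmod_lemma[of i n] ij n unfolding s_def by simp
    qed
  qed
  then show ?thesis unfolding ce by (simp add: card_image)
qed

lemma odd_cycle_exists:
  assumes s: "simple_graph V E" and ex: "\<exists>n v. odd n \<and> (adj E ^^ n) v v"
  shows "\<exists>m c. m \<ge> 1 \<and> inj_on c {..<2*m+1} \<and> cycle_edges (2*m+1) c \<subseteq> E"
proof -
  obtain n where n: "odd n \<and> (\<exists>v. (adj E ^^ n) v v)"
    and nmin: "\<And>k. odd k \<and> (\<exists>v. (adj E ^^ k) v v) \<Longrightarrow> n \<le> k"
  proof -
    obtain n0 v0 where "odd n0 \<and> (adj E ^^ n0) v0 v0" using ex by blast
    then have "\<exists>x. (odd x \<and> (\<exists>v. (adj E ^^ x) v v)) \<and> (\<forall>y. odd y \<and> (\<exists>v. (adj E ^^ y) v v) \<longrightarrow> id x \<le> id y)"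
      by (intro ex_has_least_nat[of "\<lambda>n. odd n \<and> (\<exists>v. (adj E ^^ n) v v)" n0 id]) blast
    then show ?thesis using that by auto
  qed
  then obtain v where v: "(adj E ^^ n) v v" by blast
  then obtain c where c: "c 0 = v" "c n = v" "\<forall>i<n. adj E (c i) (c (Suc i))"
    using relpowp_fun_conv by metis
  have sub: "(adj E ^^ (j - i)) (c i) (c j)" if "i \<le> j" "j \<le> n" for i j
  proof -
    define g where "g k = c (i + k)" for k
    have "g 0 = c i" "g (j - i) = c j" using that g_def by auto
    moreover have "\<forall>k<j-i. adj E (g k) (g (Suc k))" using c(3) that unfolding g_def by auto
    ultimately show ?thesis using relpowp_fun_conv by metis
  qed
  have n1: "n \<noteq> 1"
  proof
    assume "n = 1"
    then have "adj E v v" using v by (simp add: OO_def)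
    then have "{v,v} \<in> E" unfolding adj_def .
    then show False using sg_edge[OF s] by blast
  qed
  have no: "odd n" using n by blast
  have n3: "n \<ge> 3" using no n1 by presburger
  have inj: "inj_on c {..<n}"
  proof (rule ccontr)
    assume "\<not> inj_on c {..<n}"
    then obtain i j where ij: "i < j" "j < n" "c i = c j"
      unfolding inj_on_def by (metis lessThan_iff linorder_neqE_nat)
    have w1: "(adj E ^^ (j - i)) (c i) (c i)" using sub[of i j] ij by simp
    have "(adj E ^^ (n - j)) (c j) (c n)" using sub[of j n] ij by simp
    moreover have "(adj E ^^ (i - 0)) (c 0) (c i)" using sub[of 0 i] ij by simp
    ultimately have w2: "(adj E ^^ (n - j + i)) (c i) (c i)" using c ij
      by (metis relpow_comp minus_nat.diff_0)
    have "odd (j - i) \<or> odd (n - j + i)" using no ij by presburger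
    then show False
    proof
      assume "odd (j - i)" then have "n \<le> j - i" using nmin w1 by blast
      then show False using ij by simp
    next
      assume "odd (n - j + i)" then have "n \<le> n - j + i" using nmin w2 by blast
      then show False using ij by simp
    qed
  qed
  have "cycle_edges n c \<subseteq> E"
  proof
    fix e assume "e \<in> cycle_edges n c"
    then obtain i where i: "i < n" "e = {c i, c (Suc i mod n)}" unfolding cycle_edges_def by blast
    show "e \<in> E"
    proof (cases "Suc i < n")
      case True
      then show ?thesis using c(3) i unfolding adj_def by simp
    next
      case False
      then have "Suc i = n" using i by simp
      then have "Suc i mod n = 0" by simp
      then show ?thesis using c i \<open>Suc i = n\<close> unfolding adj_def by (metis lessI)
    qed
  qed
  moreover have "n = 2 * (n div 2) + 1" using no by presburger
  moreover have "n div 2 \<ge> 1" using n3 by simp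
  ultimately show ?thesis using inj by metis
qed

lemma attach_edges_in:
  "attach_trees VH EH V E \<Longrightarrow> \<forall>e\<in>EH. e \<subseteq> VH \<Longrightarrow> \<forall>e\<in>E. e \<subseteq> V"
  by (induction rule: attach_trees.induct) auto

lemma attach_inv:
  "attach_trees VH EH V E \<Longrightarrow> \<forall>e\<in>EH. e \<subseteq> VH \<Longrightarrow> finite VH \<Longrightarrow> finite EH \<Longrightarrow>
    VH \<subseteq> V \<and> EH \<subseteq> E \<and> finite V \<and> finite E \<and>
    (\<exists>t. card V = card VH + t \<and> card E = card EH + t \<and> (t = 0 \<longrightarrow> V = VH \<and> E = EH) \<and> (t \<noteq> 0 \<longrightarrow> E \<noteq> {}))"
proof (induction rule: attach_trees.induct)
  case (refl VH EH)
  then show ?case by auto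
next
  case (step VH EH V E u w)
  then obtain t where t: "card V = card VH + t" "card E = card EH + t" by blast
  have ein: "\<forall>e\<in>E. e \<subseteq> V" using attach_edges_in[OF step.hyps(1)] step.prems(1) .
  have nin: "{u,w} \<notin> E" using ein step.hyps(3) by blast
  have "card (insert w V) = card VH + Suc t" using t step.hyps(3) step.IH step.prems by simp
  moreover have "card (insert {u,w} E) = card EH + Suc t" using t nin step.IH step.prems by simp
  ultimately show ?case using step.IH step.prems by blast
qed

lemma attach_colour:
  "attach_trees VH EH V E \<Longrightarrow> \<forall>e\<in>EH. e \<subseteq> VH \<Longrightarrow> 2 \<le> k \<Longrightarrow> proper_colouring VH EH k f \<Longrightarrow>
    \<exists>g. proper_colouring V E k g"
proof (induction arbitrary: f rule: attach_trees.induct)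
  case (refl VH EH)
  then show ?case by blast
next
  case (step VH EH V E u w)
  obtain g where g: "proper_colouring V E k g" using step.IH step.prems by blast
  have ein: "\<forall>e\<in>E. e \<subseteq> V" using attach_edges_in[OF step.hyps(1)] step.prems(1) .
  define g' where "g' = g(w := (if g u = 0 then 1 else 0))"
  have "proper_colouring (insert w V) (insert {u,w} E) k g'"
    unfolding proper_colouring_def
  proof (intro conjI ballI allI impI)
    fix v assume "v \<in> insert w V"
    then show "g' v < k" using g step.prems(2) unfolding g'_def proper_colouring_def by auto
  next
    fix x y assume xy: "{x,y} \<in> insert {u,w} E"
    have uw: "u \<noteq> w" using step.hyps by auto
    show "g' x \<noteq> g' y"
    proof (cases "{x,y} = {u,w}")
      case True
      then have "(x = u \<and> y = w) \<or> (x = w \<and> y = u)" by (simp add: doubleton_eq_iff)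
      moreover have "g' u \<noteq> g' w" unfolding g'_def using uw by simp
      ultimately show ?thesis by metis
    next
      case False
      then have e: "{x,y} \<in> E" using xy by simp
      then have "x \<in> V" "y \<in> V" using ein by auto
      then have "x \<noteq> w" "y \<noteq> w" using step.hyps(3) by auto
      then show ?thesis unfolding g'_def using g e unfolding proper_colouring_def by simp
    qed
  qed
  then show ?case by blast
qed

lemma chi_le: "simple_graph V E \<Longrightarrow> proper_colouring V E k f \<Longrightarrow> chromatic_number V E \<le> k"
proof -
  assume s: "simple_graph V E" and f: "proper_colouring V E k f"
  have "colourable E V k" unfolding colourable_def using f pc_iff[OF s] by blast
  then show ?thesis using chi_le_iff[OF s] by blast
qed

lemma chi_has: "simple_graph V E \<Longrightarrow> \<exists>f. proper_colouring V E (chromatic_number V E) f"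
proof -
  assume s: "simple_graph V E"
  have "colourable E V (chromatic_number V E)" using chi_le_iff[OF s] by blast
  then show ?thesis unfolding colourable_def using pc_iff[OF s] by blast
qed

lemma complete_lower:
  assumes s: "simple_graph V E" and K: "K \<subseteq> V" "complete_edges K \<subseteq> E" "finite K"
    and f: "proper_colouring V E k f"
  shows "card K \<le> k"
proof -
  have "inj_on f K"
  proof (rule inj_onI)
    fix x y assume xy: "x \<in> K" "y \<in> K" "f x = f y"
    show "x = y"
    proof (rule ccontr)
      assume "x \<noteq> y"
      then have "{x,y} \<in> complete_edges K" unfolding complete_edges_def using xy by blast
      then have "{x,y} \<in> E" using K by blast
      then show False using f xy unfolding proper_colouring_def by blast
    qed
  qed
  then have "card K = card (f ` K)" by (simp add: card_image)
  also have "\<dots> \<le> card {..<k}"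
    by (rule card_mono) (use f K in \<open>auto simp: proper_colouring_def\<close>)
  finally show ?thesis by simp
qed

lemma edge_lower:
  assumes s: "simple_graph V E" and e: "E \<noteq> {}" and f: "proper_colouring V E k f"
  shows "2 \<le> k"
proof -
  obtain e where "e \<in> E" using e by blast
  then obtain a b where ab: "a \<in> V" "b \<in> V" "e = {a,b}" using sg_edge_ex[OF s] by blast
  then have "f a \<noteq> f b" "f a < k" "f b < k" using f \<open>e \<in> E\<close> unfolding proper_colouring_def by auto
  then show ?thesis by linarith
qed

lemma odd_cycle_lower:
  assumes ce: "cycle_edges (2*m+1) c \<subseteq> E" and cv: "cycle_vertices (2*m+1) c \<subseteq> V"
    and f: "proper_colouring V E 2 f"
  shows False
proof -
  define n where "n = 2*m+1"
  have fv: "f (c i) < 2" if "i < n" for i using f cv that unfolding proper_colouring_def cycle_vertices_def n_def by auto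
  have ed: "f (c i) \<noteq> f (c (Suc i mod n))" if "i < n" for i
  proof -
    have "{c i, c (Suc i mod n)} \<in> E" using ce that unfolding cycle_edges_def n_def by blast
    then show ?thesis using f unfolding proper_colouring_def by blast
  qed
  have alt: "i \<le> 2*m \<Longrightarrow> f (c i) = (f (c 0) + i) mod 2" for i
  proof (induction i)
    case 0 then show ?case using fv[of 0] n_def by simp
  next
    case (Suc i)
    have "Suc i mod n = Suc i" using Suc.prems n_def by simp
    then have "f (c i) \<noteq> f (c (Suc i))" using ed[of i] Suc.prems n_def by simp
    moreover have "f (c i) < 2" "f (c (Suc i)) < 2" using fv Suc.prems n_def by auto
    ultimately show ?case using Suc by presburger
  qed
  have "f (c (2*m)) = f (c 0)" using alt[of "2*m"] fv[of 0] n_def by simp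
  moreover have "Suc (2*m) mod n = 0" using n_def by simp
  ultimately show False using ed[of "2*m"] n_def by simp
qed

definition is_base :: "'a set \<Rightarrow> 'a set set \<Rightarrow> bool" where
  "is_base W F \<longleftrightarrow> F = complete_edges W \<or>
     (\<exists>m c. m \<ge> 1 \<and> inj_on c {..<2*m+1} \<and> W = cycle_vertices (2*m+1) c \<and> F = cycle_edges (2*m+1) c)"

lemma chi_pos:
  assumes s: "simple_graph V E" and c: "connected_graph V E"
  shows "chromatic_number V E \<ge> 1"
proof (rule ccontr)
  assume "\<not> chromatic_number V E \<ge> 1"
  then have "chromatic_number V E \<le> 0" by simp
  then have "colourable E V 0" using chi_le_iff[OF s] by blast
  moreover have "V \<noteq> {}" using c unfolding connected_graph_def by blast
  ultimately show False unfolding colourable_def by auto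
qed

lemma Ein_single: "simple_graph V E \<Longrightarrow> Ein E {v} = {}"
proof -
  assume s: "simple_graph V E"
  { fix e assume e: "e \<in> E" "e \<subseteq> {v}"
    then obtain a b where "a \<noteq> b" "e = {a,b}" using sg_edge_ex[OF s] by blast
    then have False using e by auto }
  then show ?thesis unfolding Ein_def by blast
qed

lemma core:
  assumes s: "simple_graph V E" and c: "connected_graph V E" and k: "k = chromatic_number V E"
  shows "\<exists>W. W \<subseteq> V \<and> W \<noteq> {} \<and> card (Ein E W) + k \<ge> card W + k*(k-1) div 2 \<and>
     (card (Ein E W) + k = card W + k*(k-1) div 2 \<longrightarrow> is_base W (Ein E W))"
proof -
  have fV: "finite V" using sg_finV[OF s] .
  have fE: "finite E" using sg_finE[OF s] .
  have k1: "k \<ge> 1" using chi_pos[OF s c] k by simp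
  have nc: "\<not> colourable E V (k - 1)"
  proof
    assume "colourable E V (k - 1)"
    then have "chromatic_number V E \<le> k - 1" using chi_le_iff[OF s] by blast
    then show False using k k1 by linarith
  qed
  consider "k = 1" | "k = 2" | "k = 3" | "k \<ge> 4" using k1 by linarith
  then show ?thesis
  proof cases
    case 1
    obtain v where v: "v \<in> V" using c unfolding connected_graph_def by blast
    have "Ein E {v} = {}" using Ein_single[OF s] .
    moreover have "complete_edges {v} = {}" unfolding complete_edges_def by auto
    ultimately show ?thesis using v 1 unfolding is_base_def by auto
  next
    case 2
    have "E \<noteq> {}"
    proof
      assume "E = {}"
      then have "colourable E V 1" unfolding colourable_def by (intro exI[of _ "\<lambda>_. 0"]) simp
      then show False using nc 2 by simp
    qed
    then obtain e where "e \<in> E" by blast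
    then obtain a b where ab: "a \<in> V" "b \<in> V" "a \<noteq> b" "e = {a,b}" using sg_edge_ex[OF s] by blast
    have ein: "Ein E {a,b} = {{a,b}}"
    proof
      show "Ein E {a,b} \<subseteq> {{a,b}}"
      proof
        fix e' assume e': "e' \<in> Ein E {a,b}"
        then have "e' \<in> E" "e' \<subseteq> {a,b}" unfolding Ein_def by auto
        then obtain x y where "x \<noteq> y" "e' = {x,y}" using sg_edge_ex[OF s] by blast
        then show "e' \<in> {{a,b}}" using \<open>e' \<subseteq> {a,b}\<close> by auto
      qed
      show "{{a,b}} \<subseteq> Ein E {a,b}" unfolding Ein_def using \<open>e \<in> E\<close> ab by auto
    qed
    have ce: "complete_edges {a,b} = {{a,b}}" unfolding complete_edges_def using ab(3) by auto
    have "card {a,b} = 2" using ab(3) by simp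
    then show ?thesis using ab 2 ein ce unfolding is_base_def by auto
  next
    case 3
    have "\<not> colourable E V 2" using nc 3 by simp
    then have "\<exists>n v. odd n \<and> (adj E ^^ n) v v" using no_odd_colourable[OF s c] by blast
    then obtain m cy where cy: "m \<ge> 1" "inj_on cy {..<2*m+1}" "cycle_edges (2*m+1) cy \<subseteq> E"
      using odd_cycle_exists[OF s] by blast
    define n where "n = 2*m+1"
    define W where "W = cycle_vertices n cy"
    have cardW: "card W = n" unfolding W_def cycle_vertices_def n_def using cy(2) by (simp add: card_image)
    have cardC: "card (cycle_edges n cy) = n" using card_cycle_edges[OF cy(2)] cy(1) n_def by simp
    have sub: "cycle_edges n cy \<subseteq> Ein E W"
      unfolding Ein_def W_def cycle_vertices_def using cy(3) n_def
      by (auto simp: cycle_edges_def)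
    have fin: "finite (Ein E W)" unfolding Ein_def using fE by simp
    have ge: "card (Ein E W) \<ge> n" using card_mono[OF fin sub] cardC by simp
    have WV: "W \<subseteq> V"
    proof
      fix x assume "x \<in> W"
      then obtain i where i: "i < n" "x = cy i" unfolding W_def cycle_vertices_def by blast
      have "{cy i, cy (Suc i mod n)} \<in> E" using cy(3) i(1) unfolding cycle_edges_def n_def by blast
      then show "x \<in> V" using sg_edge[OF s] i by blast
    qed
    have Wne: "W \<noteq> {}" using cardW n_def by auto
    have "card (Ein E W) + k = card W + k*(k-1) div 2 \<longrightarrow> is_base W (Ein E W)"
    proof
      assume "card (Ein E W) + k = card W + k*(k-1) div 2"
      then have "card (Ein E W) = card (cycle_edges n cy)" using 3 cardW cardC by simp
      then have "cycle_edges n cy = Ein E W" using card_subset_eq[OF fin sub] by simp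
      then show "is_base W (Ein E W)" unfolding is_base_def using cy W_def n_def by metis
    qed
    then show ?thesis using WV Wne ge cardW 3 by auto
  next
    case 4
    have j: "k - 1 \<ge> 3" using 4 by simp
    have kk: "k - 1 + 1 = k" using 4 by simp
    obtain W where W: "W \<subseteq> V" "W \<noteq> {}" "card (Ein E W) + (k - 1 + 1) \<ge> card W + (k - 1 + 1)*(k-1) div 2"
      "card (Ein E W) + (k - 1 + 1) = card W + (k - 1 + 1)*(k-1) div 2 \<longrightarrow> Ein E W = complete_edges W"
      using crit_core[OF s nc j] by blast
    show ?thesis using W kk unfolding is_base_def by metis
  qed
qed

lemma int_conv:
  fixes k a b :: nat
  shows "(int k * (int k - 1)) div 2 + int a - int k = int b \<longleftrightarrow> b + k = a + k*(k-1) div 2"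
proof -
  have h: "int k * (int k - 1) = int (k * (k - 1))" by (cases k) (auto simp: algebra_simps)
  have "(int k * (int k - 1)) div 2 = int (k*(k-1) div 2)" unfolding h zdiv_int by simp
  then show ?thesis by linarith
qed

lemma forward:
  assumes s: "simple_graph V E" and c: "connected_graph V E"
    and eq: "card E + chromatic_number V E = card V + chromatic_number V E * (chromatic_number V E - 1) div 2"
  shows "type_A V E \<or> type_B V E"
proof -
  define k where "k = chromatic_number V E"
  have fV: "finite V" using sg_finV[OF s] .
  have fE: "finite E" using sg_finE[OF s] .
  obtain W where W: "W \<subseteq> V" "W \<noteq> {}" "card (Ein E W) + k \<ge> card W + k*(k-1) div 2"
    "card (Ein E W) + k = card W + k*(k-1) div 2 \<longrightarrow> is_base W (Ein E W)"
    using core[OF s c k_def] by blast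
  have T: "card (Eout E W) \<ge> card (V - W)"
     "card (Eout E W) = card (V - W) \<longrightarrow> attach_trees W (Ein E W) V E"
    using tree_lemma[OF s c W(1) W(2)] by auto
  have cE: "card E = card (Ein E W) + card (Eout E W)"
  proof -
    have "E = Ein E W \<union> Eout E W" "Ein E W \<inter> Eout E W = {}" unfolding Ein_def Eout_def by auto
    moreover have "finite (Ein E W)" "finite (Eout E W)" unfolding Ein_def Eout_def using fE by auto
    ultimately show ?thesis by (metis card_Un_disjoint)
  qed
  have cV: "card (V - W) + card W = card V" using W(1) fV
    by (metis card_Diff_subset finite_subset le_add_diff_inverse2 card_mono)
  have eq': "card E + k = card V + k*(k-1) div 2" using eq unfolding k_def .
  have e1: "card (Ein E W) + k = card W + k*(k-1) div 2" using eq' cE cV W(3) T(1) by linarith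
  have e2: "card (Eout E W) = card (V - W)" using eq' cE cV W(3) T(1) by linarith
  have base: "is_base W (Ein E W)" using W(4) e1 by blast
  have att: "attach_trees W (Ein E W) V E" using T(2) e2 by blast
  have fW: "finite W" using W(1) fV finite_subset by blast
  show ?thesis
    using base unfolding is_base_def
  proof
    assume "Ein E W = complete_edges W"
    then have "type_A V E" unfolding type_A_def using c fW W(2) att by metis
    then show ?thesis by blast
  next
    assume "\<exists>m c. m \<ge> 1 \<and> inj_on c {..<2*m+1} \<and> W = cycle_vertices (2*m+1) c \<and> Ein E W = cycle_edges (2*m+1) c"
    then obtain m cy where "m \<ge> 1" "inj_on cy {..<2*m+1}" "W = cycle_vertices (2*m+1) cy" "Ein E W = cycle_edges (2*m+1) cy"
      by blast
    then have "type_B V E" unfolding type_B_def using c att by metis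
    then show ?thesis by blast
  qed
qed

lemma backward_A:
  assumes s: "simple_graph V E" and A: "type_A V E"
  shows "card E + chromatic_number V E = card V + chromatic_number V E * (chromatic_number V E - 1) div 2"
proof -
  obtain K where K: "finite K" "K \<noteq> {}" "attach_trees K (complete_edges K) V E"
    using A unfolding type_A_def by blast
  have ein: "\<forall>e\<in>complete_edges K. e \<subseteq> K" unfolding complete_edges_def by auto
  have fc: "finite (complete_edges K)"
  proof -
    have "complete_edges K \<subseteq> Pow K" using ein by auto
    then show ?thesis using K(1) finite_subset by blast
  qed
  define j where "j = card K"
  have j1: "j \<ge> 1" using K j_def by (simp add: Suc_leI card_gt_0_iff)
  obtain t where inv: "K \<subseteq> V" "complete_edges K \<subseteq> E" "card V = j + t"
    "card E = j * (j - 1) div 2 + t" "t = 0 \<longrightarrow> V = K \<and> E = complete_edges K" "t \<noteq> 0 \<longrightarrow> E \<noteq> {}"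
    using attach_inv[OF K(3) ein K(1) fc] card_complete_edges[OF K(1)] j_def by auto
  define k where "k = chromatic_number V E"
  obtain f where f: "proper_colouring V E k f" using chi_has[OF s] k_def by blast
  have lo: "j \<le> k" using complete_lower[OF s inv(1) inv(2) K(1) f] j_def by simp
  obtain h where h: "bij_betw h K {0..<j}" using ex_bij_betw_finite_nat[OF K(1)] j_def by blast
  have hc: "proper_colouring K (complete_edges K) (max j 2) h"
    unfolding proper_colouring_def
  proof (intro conjI ballI allI impI)
    fix v assume "v \<in> K"
    then have "h v \<in> {0..<j}" using h unfolding bij_betw_def by blast
    then show "h v < max j 2" by simp
  next
    fix u v assume "{u,v} \<in> complete_edges K"
    then obtain a b where ab: "a \<in> K" "b \<in> K" "a \<noteq> b" "{u,v} = {a,b}" unfolding complete_edges_def by blast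
    then have "u \<in> K" "v \<in> K" "u \<noteq> v" by (auto simp: doubleton_eq_iff)
    then show "h u \<noteq> h v" using h unfolding bij_betw_def inj_on_def by blast
  qed
  have "k = (if t = 0 then j else max j 2)"
  proof (cases "t = 0")
    case True
    then have "V = K" "E = complete_edges K" using inv by auto
    then have "proper_colouring V E j h" using hc j1 unfolding proper_colouring_def
      by (metis (no_types, lifting) atLeastLessThan_iff bij_betw_apply h)
    then have "k \<le> j" using chi_le[OF s] k_def by blast
    then show ?thesis using lo True by simp
  next
    case False
    obtain g where "proper_colouring V E (max j 2) g" using attach_colour[OF K(3) ein _ hc] by auto
    then have "k \<le> max j 2" using chi_le[OF s] k_def by blast
    moreover have "2 \<le> k" using edge_lower[OF s _ f] inv(6) False by blast
    ultimately show ?thesis using lo False by simp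
  qed
  then have kv: "k = (if t = 0 then j else max j 2)" .
  have "card E + k = card V + k * (k - 1) div 2"
  proof (cases "t = 0")
    case True then show ?thesis using kv inv(3,4) by simp
  next
    case False
    show ?thesis
    proof (cases "j = 1")
      case True then have "k = 2" using kv False by simp
      then show ?thesis using inv(3,4) True by simp
    next
      case False2: False
      then have "k = j" using kv False j1 by simp
      then show ?thesis using inv(3,4) by simp
    qed
  qed
  then show ?thesis unfolding k_def .
qed

lemma cyc_col_ok:
  assumes "i < 2*m+1" "m \<ge> 1"
  shows "(if i = 2*m then 2 else i mod 2) \<noteq>
         (if Suc i mod (2*m+1) = 2*m then 2 else (Suc i mod (2*m+1)) mod (2::nat))"
proof (cases "i = 2*m")
  case True
  then have "Suc i mod (2*m+1) = 0" by simp
  then show ?thesis using True assms by simp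
next
  case False
  have e: "Suc i mod (2*m+1) = Suc i" using assms False by simp
  show ?thesis unfolding e using False by presburger
qed

lemma backward_B:
  assumes s: "simple_graph V E" and B: "type_B V E"
  shows "card E + chromatic_number V E = card V + chromatic_number V E * (chromatic_number V E - 1) div 2"
proof -
  obtain m cy where B: "m \<ge> 1" "inj_on cy {..<2*m+1}"
     "attach_trees (cycle_vertices (2*m+1) cy) (cycle_edges (2*m+1) cy) V E"
    using B unfolding type_B_def by blast
  define n where "n = 2*m+1"
  have ein: "\<forall>e\<in>cycle_edges n cy. e \<subseteq> cycle_vertices n cy"
    unfolding cycle_edges_def cycle_vertices_def n_def by auto
  have fv: "finite (cycle_vertices n cy)" unfolding cycle_vertices_def by simp
  have fe: "finite (cycle_edges n cy)"
  proof -
    have "cycle_edges n cy = (\<lambda>i. {cy i, cy (Suc i mod n)}) ` {..<n}" unfolding cycle_edges_def by auto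
    then show ?thesis by simp
  qed
  have cv: "card (cycle_vertices n cy) = n" unfolding cycle_vertices_def n_def using B(2) by (simp add: card_image)
  have cc: "card (cycle_edges n cy) = n" using card_cycle_edges[of cy n] B n_def by simp
  obtain t where inv: "cycle_vertices n cy \<subseteq> V" "cycle_edges n cy \<subseteq> E" "card V = n + t" "card E = n + t"
    using attach_inv[OF B(3)[folded n_def] ein fv fe] cv cc by auto
  define col where "col x = (let i = inv_into {..<n} cy x in if i = 2*m then 2 else i mod 2)" for x
  have colc: "col (cy i) = (if i = 2*m then 2 else i mod 2)" if "i < n" for i
    unfolding col_def using B(2) that n_def by (simp add: inv_into_f_f)
  have pc: "proper_colouring (cycle_vertices n cy) (cycle_edges n cy) 3 col"
    unfolding proper_colouring_def
  proof (intro conjI ballI allI impI)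
    fix v assume "v \<in> cycle_vertices n cy"
    then obtain i where "i < n" "v = cy i" unfolding cycle_vertices_def by blast
    then show "col v < 3" using colc by (simp add: less_trans[OF mod_less_divisor])
  next
    fix u v assume "{u,v} \<in> cycle_edges n cy"
    then obtain i where i: "i < n" "{u,v} = {cy i, cy (Suc i mod n)}" unfolding cycle_edges_def by blast
    have "Suc i mod n < n" using n_def by simp
    then have cB: "col (cy (Suc i mod n)) = (if Suc i mod n = 2*m then 2 else (Suc i mod n) mod 2)"
      by (rule colc)
    have cA: "col (cy i) = (if i = 2*m then 2 else i mod 2)" by (rule colc[OF i(1)])
    have C': "(if i = 2*m then 2 else i mod 2) \<noteq> (if Suc i mod n = 2*m then 2 else (Suc i mod n) mod (2::nat))"
      using cyc_col_ok[of i m] i(1) B(1) unfolding n_def by blast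
    have d: "col (cy i) \<noteq> col (cy (Suc i mod n))" unfolding cA cB by (rule C')
    from i(2) have "(u = cy i \<and> v = cy (Suc i mod n)) \<or> (u = cy (Suc i mod n) \<and> v = cy i)"
      by (simp add: doubleton_eq_iff)
    then show "col u \<noteq> col v" using d by auto
  qed
  define k where "k = chromatic_number V E"
  obtain g where "proper_colouring V E 3 g" using attach_colour[OF B(3)[folded n_def] ein _ pc] by auto
  then have k3: "k \<le> 3" using chi_le[OF s] k_def by blast
  have "k \<ge> 3"
  proof (rule ccontr)
    assume "\<not> k \<ge> 3"
    obtain f where f: "proper_colouring V E k f" using chi_has[OF s] k_def by blast
    then have "proper_colouring V E 2 f" using \<open>\<not> k \<ge> 3\<close> unfolding proper_colouring_def by auto
    then show False using odd_cycle_lower[of m cy E V f] inv(1,2) n_def by blast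
  qed
  then have "k = 3" using k3 by simp
  then show ?thesis using inv(3,4) k_def by simp
qed

theorem theorem1:
  fixes V :: "'a set" and E :: "'a set set"
  assumes "simple_graph V E" and "connected_graph V E"
  shows "(int (chromatic_number V E) * (int (chromatic_number V E) - 1)) div 2
           + int (card V) - int (chromatic_number V E) = int (card E)
         \<longleftrightarrow> type_A V E \<or> type_B V E"
proof -
  have "(int (chromatic_number V E) * (int (chromatic_number V E) - 1)) div 2
           + int (card V) - int (chromatic_number V E) = int (card E) \<longleftrightarrow>
        card E + chromatic_number V E = card V + chromatic_number V E * (chromatic_number V E - 1) div 2"
    by (rule int_conv)
  then show ?thesis using forward[OF assms] backward_A[OF assms(1)] backward_B[OF assms(1)] by blast
qed

end
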